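(* Let $n\ge 3$ and $a<b<c$ be elements of $\mathcal{C}_n$, and let $\triangle=\triangle^{(n)}\{a,b,c\}$. Define the following subsets of $\triangle$ (each described by the triple $(\alpha(a),\alpha(b),\alpha(c))$): $N^{[a]}=\{\alpha\in\triangle:\ \alpha^m=\overline{a}\text{ for some } m\ge1\}$ (equivalently $(\alpha(a),\alpha(b),\alpha(c))\in\{(a,a,a),(a,a,b)\}$); $N^{[b]}=\{\alpha\in\triangle:\ \alpha^m=\overline{b}\text{ for some } m\ge1\}$ (equivalently the triple is $(b,b,b)$); $N^{[c]}=\{\alpha\in\triangle:\ \alpha^m=\overline{c}\text{ for some } m\ge1\}$ (equivalently the triple is $(b,c,c)$ or $(c,c,c)$); $L_{par}=\{\alpha\in\triangle:\ \alpha(a)=a,\ \alpha(b)=\alpha(c)=b\}$; $R_{par}=\{\alpha\in\triangle:\ \alpha(a)=\alpha(b)=b,\ \alpha(c)=c\}$; $L_{\triangle}=\{\alpha\in\triangle:\ \alpha(a)=\alpha(b)=a,\ \alpha(c)=c\}$; $R_{\triangle}=\{\alpha\in\triangle:\ \alpha(a)=a,\ \alpha(b)=\alpha(c)=c\}$; $\mathcal{RI}$ = the set of right identities of $\triangle$. Then each of these eight sets is a subsemiring of $\triangle$, and $\triangle$ is the disjoint union of these eight sets.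
   Context: $\mathcal{C}_n=\{0,1,\dots,n-1\}$ is the chain with its usual order, a join-semilattice with $x\vee y=\max(x,y)$. $\widehat{\mathcal{E}}_{\mathcal{C}_n}$ is the set of all order-preserving maps $\alpha:\mathcal{C}_n\to\mathcal{C}_n$ (not required to fix $0$), a semiring with $(\alpha+\beta)(x)=\max(\alpha(x),\beta(x))$ and $(\alpha\cdot\beta)(x)=\beta(\alpha(x))$ ("first $\alpha$, then $\beta$"); powers $\alpha^m$ are taken with respect to this product. $\overline{x}$ is the constant map with value $x$. The triangle $\triangle^{(n)}\{a,b,c\}$ is the subsemiring of all $\alpha\in\widehat{\mathcal{E}}_{\mathcal{C}_n}$ with image contained in $\{a,b,c\}$. A right identity of $\triangle$ is $e\in\triangle$ with $\alpha\cdot e=\alpha$ for all $\alpha\in\triangle$ (these are exactly the $\alpha\in\triangle$ with $\alpha(a)=a,\alpha(b)=b,\alpha(c)=c$). A subsemiring is a nonempty subset closed under $+$ and $\cdot$. *)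

theory Defs
  imports Main
begin

text \<open>The chain C_n is {0..<n} (as nat). Maps C_n -> C_n are represented as
  functions nat => nat that are extensional: value 0 outside {0..<n}.\<close>

definition endo :: "nat \<Rightarrow> (nat \<Rightarrow> nat) set" where
  "endo n = {\<alpha>. (\<forall>x<n. \<alpha> x < n) \<and> (\<forall>x y. x \<le> y \<and> y < n \<longrightarrow> \<alpha> x \<le> \<alpha> y)
              \<and> (\<forall>x. n \<le> x \<longrightarrow> \<alpha> x = 0)}"

definition eadd :: "nat \<Rightarrow> (nat \<Rightarrow> nat) \<Rightarrow> (nat \<Rightarrow> nat) \<Rightarrow> (nat \<Rightarrow> nat)" where
  "eadd n \<alpha> \<beta> = (\<lambda>x. if x < n then max (\<alpha> x) (\<beta> x) else 0)"

definition emult :: "nat \<Rightarrow> (nat \<Rightarrow> nat) \<Rightarrow> (nat \<Rightarrow> nat) \<Rightarrow> (nat \<Rightarrow> nat)" where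
  "emult n \<alpha> \<beta> = (\<lambda>x. if x < n then \<beta> (\<alpha> x) else 0)"

text \<open>epow n alpha m is alpha^(m+1).\<close>
fun epow :: "nat \<Rightarrow> (nat \<Rightarrow> nat) \<Rightarrow> nat \<Rightarrow> (nat \<Rightarrow> nat)" where
  "epow n \<alpha> 0 = \<alpha>"
| "epow n \<alpha> (Suc m) = emult n (epow n \<alpha> m) \<alpha>"

definition const_map :: "nat \<Rightarrow> nat \<Rightarrow> (nat \<Rightarrow> nat)" where
  "const_map n c = (\<lambda>x. if x < n then c else 0)"

definition triangle :: "nat \<Rightarrow> nat \<Rightarrow> nat \<Rightarrow> nat \<Rightarrow> (nat \<Rightarrow> nat) set" where
  "triangle n a b c = {\<alpha> \<in> endo n. \<forall>x<n. \<alpha> x \<in> {a, b, c}}"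

definition is_subsemiring :: "nat \<Rightarrow> (nat \<Rightarrow> nat) set \<Rightarrow> bool" where
  "is_subsemiring n S \<longleftrightarrow> S \<noteq> {} \<and> (\<forall>\<alpha>\<in>S. \<forall>\<beta>\<in>S. eadd n \<alpha> \<beta> \<in> S \<and> emult n \<alpha> \<beta> \<in> S)"

definition nilset :: "nat \<Rightarrow> (nat \<Rightarrow> nat) set \<Rightarrow> nat \<Rightarrow> (nat \<Rightarrow> nat) set" where
  "nilset n T x = {\<alpha> \<in> T. \<exists>m. epow n \<alpha> m = const_map n x}"

definition right_identities :: "nat \<Rightarrow> (nat \<Rightarrow> nat) set \<Rightarrow> (nat \<Rightarrow> nat) set" where
  "right_identities n T = {e \<in> T. \<forall>\<alpha>\<in>T. emult n \<alpha> e = \<alpha>}"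

end

theory Submission
  imports Defs
begin

lemma T_mem: "\<alpha> \<in> triangle n a b c \<Longrightarrow> x < n \<Longrightarrow> \<alpha> x \<in> {a,b,c}"
  by (auto simp: triangle_def)

lemma T_lt: "\<alpha> \<in> triangle n a b c \<Longrightarrow> x < n \<Longrightarrow> \<alpha> x < n"
  by (auto simp: triangle_def endo_def)

lemma T_mono: "\<alpha> \<in> triangle n a b c \<Longrightarrow> x \<le> y \<Longrightarrow> y < n \<Longrightarrow> \<alpha> x \<le> \<alpha> y"
  by (auto simp: triangle_def endo_def)

lemma T_out: "\<alpha> \<in> triangle n a b c \<Longrightarrow> n \<le> x \<Longrightarrow> \<alpha> x = 0"
  by (auto simp: triangle_def endo_def)

lemma T_intro:
  assumes "\<And>x. x < n \<Longrightarrow> \<alpha> x \<in> {a,b,c}" "\<And>x. x < n \<Longrightarrow> \<alpha> x < n"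
    "\<And>x y. x \<le> y \<Longrightarrow> y < n \<Longrightarrow> \<alpha> x \<le> \<alpha> y" "\<And>x. n \<le> x \<Longrightarrow> \<alpha> x = 0"
  shows "\<alpha> \<in> triangle n a b c"
  using assms by (auto simp: triangle_def endo_def)

lemma eadd_T:
  assumes "\<alpha> \<in> triangle n a b c" "\<beta> \<in> triangle n a b c"
  shows "eadd n \<alpha> \<beta> \<in> triangle n a b c"
proof (rule T_intro)
  fix x assume "x < n"
  then show "eadd n \<alpha> \<beta> x \<in> {a,b,c}" "eadd n \<alpha> \<beta> x < n"
    using T_mem[OF assms(1), of x] T_mem[OF assms(2), of x] T_lt[OF assms(1), of x] T_lt[OF assms(2), of x]
    by (auto simp: eadd_def max_def)
next
  fix x y :: nat assume "x \<le> y" "y < n"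
  then show "eadd n \<alpha> \<beta> x \<le> eadd n \<alpha> \<beta> y"
    using T_mono[OF assms(1), of x y] T_mono[OF assms(2), of x y]
    by (auto simp: eadd_def max_def)
next
  fix x :: nat assume "n \<le> x" then show "eadd n \<alpha> \<beta> x = 0" by (simp add: eadd_def)
qed

lemma emult_T:
  assumes "\<alpha> \<in> triangle n a b c" "\<beta> \<in> triangle n a b c"
  shows "emult n \<alpha> \<beta> \<in> triangle n a b c"
proof (rule T_intro)
  fix x assume "x < n"
  then show "emult n \<alpha> \<beta> x \<in> {a,b,c}" "emult n \<alpha> \<beta> x < n"
    using T_mem[OF assms(2), of "\<alpha> x"] T_lt[OF assms(1), of x] T_lt[OF assms(2), of "\<alpha> x"]
    by (auto simp: emult_def)
next
  fix x y :: nat assume "x \<le> y" "y < n"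
  then show "emult n \<alpha> \<beta> x \<le> emult n \<alpha> \<beta> y"
    using T_mono[OF assms(1), of x y] T_mono[OF assms(2), of "\<alpha> x" "\<alpha> y"] T_lt[OF assms(1), of y]
    by (auto simp: emult_def)
next
  fix x :: nat assume "n \<le> x" then show "emult n \<alpha> \<beta> x = 0" by (simp add: emult_def)
qed

definition stp :: "nat \<Rightarrow> nat \<Rightarrow> nat \<Rightarrow> nat \<Rightarrow> nat \<Rightarrow> nat \<Rightarrow> nat \<Rightarrow> nat" where
  "stp n a b p q r = (\<lambda>x. if n \<le> x then 0 else if x \<le> a then p else if x \<le> b then q else r)"

lemma stp_T:
  assumes "a < b" "b < c" "c < n" "p \<in> {a,b,c}" "q \<in> {a,b,c}" "r \<in> {a,b,c}" "p \<le> q" "q \<le> r"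
  shows "stp n a b p q r \<in> triangle n a b c \<and> stp n a b p q r a = p \<and> stp n a b p q r b = q
     \<and> stp n a b p q r c = r"
proof -
  have "stp n a b p q r \<in> triangle n a b c"
    by (rule T_intro) (use assms in \<open>auto simp: stp_def\<close>)
  then show ?thesis using assms by (auto simp: stp_def)
qed

lemma tri_cases:
  assumes "\<alpha> \<in> triangle n a b c" "a < b" "b < c" "c < n"
  shows "(\<alpha> a, \<alpha> b, \<alpha> c) \<in> {(a,a,a),(a,a,b),(a,a,c),(a,b,b),(a,b,c),(a,c,c),(b,b,b),(b,b,c),(b,c,c),(c,c,c)}"
proof -
  have "\<alpha> a \<in> {a,b,c}" "\<alpha> b \<in> {a,b,c}" "\<alpha> c \<in> {a,b,c}" using assms T_mem[OF assms(1), of a] T_mem[OF assms(1), of b] T_mem[OF assms(1), of c] by auto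
  moreover have "\<alpha> a \<le> \<alpha> b" "\<alpha> b \<le> \<alpha> c" using assms T_mono[OF assms(1), of a b] T_mono[OF assms(1), of b c] by auto
  ultimately show ?thesis using assms(2,3)
    apply (simp only: insert_iff empty_iff simp_thms)
    apply (elim disjE)
    apply (simp_all)
    done
qed

lemma epow_Suc_app: "x < n \<Longrightarrow> epow n \<alpha> (Suc m) x = \<alpha> (epow n \<alpha> m x)"
  by (simp add: emult_def)

lemma epow_fix: "\<alpha> y = y \<Longrightarrow> y < n \<Longrightarrow> epow n \<alpha> m y = y"
  by (induction m) (auto simp: emult_def)

lemma nil_fix:
  assumes "epow n \<alpha> m = const_map n x" "\<alpha> y = y" "y < n"
  shows "x = y"
proof -
  have "epow n \<alpha> m y = y" by (rule epow_fix) (use assms in auto)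
  then show ?thesis using assms by (simp add: const_map_def)
qed

lemma epow_out: "\<alpha> \<in> triangle n a b c \<Longrightarrow> n \<le> x \<Longrightarrow> epow n \<alpha> m x = 0"
  by (cases m) (auto simp: emult_def T_out)

lemma nil_intro:
  assumes "\<alpha> \<in> triangle n a b c" "\<And>y. y \<in> {a,b,c} \<Longrightarrow> \<alpha> (\<alpha> y) = z"
  shows "epow n \<alpha> 2 = const_map n z"
proof
  fix x show "epow n \<alpha> 2 x = const_map n z x"
  proof (cases "x < n")
    case True
    have "epow n \<alpha> 2 x = \<alpha> (\<alpha> (\<alpha> x))"
      using True by (simp add: numeral_2_eq_2 emult_def)
    also have "\<dots> = z" using assms(2) T_mem[OF assms(1) True] by blast
    finally show ?thesis using True by (simp add: const_map_def)
  next
    case False then show ?thesis using epow_out[OF assms(1)] by (simp add: const_map_def)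
  qed
qed


definition tlook :: "nat \<Rightarrow> nat \<Rightarrow> nat \<Rightarrow> nat \<times> nat \<times> nat \<Rightarrow> nat \<Rightarrow> nat" where
  "tlook a b c s y = (if y = a then fst s else if y = b then fst (snd s) else snd (snd s))"

definition tmax :: "nat \<times> nat \<times> nat \<Rightarrow> nat \<times> nat \<times> nat \<Rightarrow> nat \<times> nat \<times> nat" where
  "tmax t s = (max (fst t) (fst s), max (fst (snd t)) (fst (snd s)), max (snd (snd t)) (snd (snd s)))"

definition tcomp :: "nat \<Rightarrow> nat \<Rightarrow> nat \<Rightarrow> nat \<times> nat \<times> nat \<Rightarrow> nat \<times> nat \<times> nat \<Rightarrow> nat \<times> nat \<times> nat" where
  "tcomp a b c t s = (tlook a b c s (fst t), tlook a b c s (fst (snd t)), tlook a b c s (snd (snd t)))"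

definition valid :: "nat \<Rightarrow> nat \<Rightarrow> nat \<Rightarrow> (nat \<times> nat \<times> nat) set" where
  "valid a b c = {(a,a,a),(a,a,b),(a,a,c),(a,b,b),(a,b,c),(a,c,c),(b,b,b),(b,b,c),(b,c,c),(c,c,c)}"

lemma sub_gen:
  assumes abc: "a < b" "b < c" "c < n"
    and P: "P \<subseteq> valid a b c" "P \<noteq> {}"
    and cl: "\<And>t s. t \<in> P \<Longrightarrow> s \<in> P \<Longrightarrow> tmax t s \<in> P \<and> tcomp a b c t s \<in> P"
  shows "is_subsemiring n {\<alpha> \<in> triangle n a b c. (\<alpha> a, \<alpha> b, \<alpha> c) \<in> P}"
  unfolding is_subsemiring_def
proof (intro conjI ballI)
  obtain p q r where pqr: "(p,q,r) \<in> P" using P(2) by auto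
  then have v: "(p,q,r) \<in> valid a b c" using P(1) by auto
  have "p \<in> {a,b,c}" "q \<in> {a,b,c}" "r \<in> {a,b,c}" "p \<le> q" "q \<le> r"
    using v abc by (auto simp: valid_def)
  from stp_T[OF abc this] pqr
  show "{\<alpha> \<in> triangle n a b c. (\<alpha> a, \<alpha> b, \<alpha> c) \<in> P} \<noteq> {}" by auto
next
  fix \<alpha> \<beta> assume A: "\<alpha> \<in> {\<alpha> \<in> triangle n a b c. (\<alpha> a, \<alpha> b, \<alpha> c) \<in> P}"
    and B: "\<beta> \<in> {\<alpha> \<in> triangle n a b c. (\<alpha> a, \<alpha> b, \<alpha> c) \<in> P}"
  then have aT: "\<alpha> \<in> triangle n a b c" and bT: "\<beta> \<in> triangle n a b c"
    and aP: "(\<alpha> a, \<alpha> b, \<alpha> c) \<in> P" and bP: "(\<beta> a, \<beta> b, \<beta> c) \<in> P" by auto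
  have an: "a < n" "b < n" "c < n" using abc by auto
  have "(eadd n \<alpha> \<beta> a, eadd n \<alpha> \<beta> b, eadd n \<alpha> \<beta> c) = tmax (\<alpha> a, \<alpha> b, \<alpha> c) (\<beta> a, \<beta> b, \<beta> c)"
    using an by (simp add: eadd_def tmax_def)
  then show "eadd n \<alpha> \<beta> \<in> {\<alpha> \<in> triangle n a b c. (\<alpha> a, \<alpha> b, \<alpha> c) \<in> P}"
    using cl[OF aP bP] eadd_T[OF aT bT] by simp
  have look: "\<beta> y = tlook a b c (\<beta> a, \<beta> b, \<beta> c) y" if "y \<in> {a,b,c}" for y
    using that by (auto simp: tlook_def)
  have "(emult n \<alpha> \<beta> a, emult n \<alpha> \<beta> b, emult n \<alpha> \<beta> c) = tcomp a b c (\<alpha> a, \<alpha> b, \<alpha> c) (\<beta> a, \<beta> b, \<beta> c)"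
    using an look[OF T_mem[OF aT an(1)]] look[OF T_mem[OF aT an(2)]] look[OF T_mem[OF aT an(3)]]
    by (simp add: emult_def tcomp_def)
  then show "emult n \<alpha> \<beta> \<in> {\<alpha> \<in> triangle n a b c. (\<alpha> a, \<alpha> b, \<alpha> c) \<in> P}"
    using cl[OF aP bP] emult_T[OF aT bT] by simp
qed


lemma nil_char:
  assumes abc: "a < b" "b < c" "c < n" and x: "x \<in> {a,b,c}"
    and good: "\<And>\<alpha>. \<alpha> \<in> triangle n a b c \<Longrightarrow> (\<alpha> a, \<alpha> b, \<alpha> c) \<in> P \<Longrightarrow> (\<forall>y\<in>{a,b,c}. \<alpha> (\<alpha> y) = x)"
    and bad: "\<And>\<alpha>. \<alpha> \<in> triangle n a b c \<Longrightarrow> (\<alpha> a, \<alpha> b, \<alpha> c) \<in> valid a b c - P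
          \<Longrightarrow> \<exists>y\<in>{a,b,c}. y \<noteq> x \<and> \<alpha> y = y"
  shows "nilset n (triangle n a b c) x = {\<alpha> \<in> triangle n a b c. (\<alpha> a, \<alpha> b, \<alpha> c) \<in> P}"
proof (intro set_eqI iffI)
  fix \<alpha> assume "\<alpha> \<in> nilset n (triangle n a b c) x"
  then obtain m where T: "\<alpha> \<in> triangle n a b c" and m: "epow n \<alpha> m = const_map n x"
    by (auto simp: nilset_def)
  have v: "(\<alpha> a, \<alpha> b, \<alpha> c) \<in> valid a b c" using tri_cases[OF T abc] by (simp add: valid_def)
  show "\<alpha> \<in> {\<alpha> \<in> triangle n a b c. (\<alpha> a, \<alpha> b, \<alpha> c) \<in> P}"
  proof (rule ccontr)
    assume "\<alpha> \<notin> {\<alpha> \<in> triangle n a b c. (\<alpha> a, \<alpha> b, \<alpha> c) \<in> P}"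
    with T v have "(\<alpha> a, \<alpha> b, \<alpha> c) \<in> valid a b c - P" by auto
    from bad[OF T this] obtain y where y: "y \<in> {a,b,c}" "y \<noteq> x" "\<alpha> y = y" by blast
    have "y < n" using y(1) abc by auto
    from nil_fix[OF m y(3) this] y(2) show False by simp
  qed
next
  fix \<alpha> assume "\<alpha> \<in> {\<alpha> \<in> triangle n a b c. (\<alpha> a, \<alpha> b, \<alpha> c) \<in> P}"
  then have T: "\<alpha> \<in> triangle n a b c" and P: "(\<alpha> a, \<alpha> b, \<alpha> c) \<in> P" by auto
  have "epow n \<alpha> 2 = const_map n x" using nil_intro[OF T] good[OF T P] by blast
  then show "\<alpha> \<in> nilset n (triangle n a b c) x" using T by (auto simp: nilset_def)
qed

lemma const_T: "a < b \<Longrightarrow> b < c \<Longrightarrow> c < n \<Longrightarrow> y \<in> {a,b,c} \<Longrightarrow> const_map n y \<in> triangle n a b c"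
  by (rule T_intro) (auto simp: const_map_def)

lemma RI_char:
  assumes abc: "a < b" "b < c" "c < n"
  shows "right_identities n (triangle n a b c) = {\<alpha> \<in> triangle n a b c. (\<alpha> a, \<alpha> b, \<alpha> c) \<in> {(a,b,c)}}"
proof (intro set_eqI iffI)
  fix e assume "e \<in> right_identities n (triangle n a b c)"
  then have T: "e \<in> triangle n a b c" and R: "\<And>\<alpha>. \<alpha> \<in> triangle n a b c \<Longrightarrow> emult n \<alpha> e = \<alpha>"
    by (auto simp: right_identities_def)
  have "e y = y" if "y \<in> {a,b,c}" for y
  proof -
    have "emult n (const_map n y) e 0 = const_map n y 0" using R[OF const_T[OF abc that]] by simp
    then show ?thesis using abc by (simp add: emult_def const_map_def)
  qed
  then show "e \<in> {\<alpha> \<in> triangle n a b c. (\<alpha> a, \<alpha> b, \<alpha> c) \<in> {(a,b,c)}}" using T by auto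
next
  fix e assume "e \<in> {\<alpha> \<in> triangle n a b c. (\<alpha> a, \<alpha> b, \<alpha> c) \<in> {(a,b,c)}}"
  then have T: "e \<in> triangle n a b c" and E: "e a = a" "e b = b" "e c = c" by auto
  have "emult n \<alpha> e = \<alpha>" if A: "\<alpha> \<in> triangle n a b c" for \<alpha>
  proof
    fix x show "emult n \<alpha> e x = \<alpha> x"
    proof (cases "x < n")
      case True then show ?thesis using T_mem[OF A True] E by (auto simp: emult_def)
    next
      case False then show ?thesis using T_out[OF A] by (simp add: emult_def)
    qed
  qed
  then show "e \<in> right_identities n (triangle n a b c)" using T by (auto simp: right_identities_def)
qed


theorem theorem40:
  fixes n a b c :: nat
  assumes "n \<ge> 3" and "a < b" and "b < c" and "c < n"
  defines "T \<equiv> triangle n a b c"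
  defines "Na \<equiv> nilset n T a" and "Nb \<equiv> nilset n T b" and "Nc \<equiv> nilset n T c"
  defines "Lpar \<equiv> {\<alpha> \<in> T. \<alpha> a = a \<and> \<alpha> b = b \<and> \<alpha> c = b}"
  defines "Rpar \<equiv> {\<alpha> \<in> T. \<alpha> a = b \<and> \<alpha> b = b \<and> \<alpha> c = c}"
  defines "Ltri \<equiv> {\<alpha> \<in> T. \<alpha> a = a \<and> \<alpha> b = a \<and> \<alpha> c = c}"
  defines "Rtri \<equiv> {\<alpha> \<in> T. \<alpha> a = a \<and> \<alpha> b = c \<and> \<alpha> c = c}"
  defines "RI \<equiv> right_identities n T"
  defines "Ss \<equiv> [Na, Nb, Nc, Lpar, Rpar, Ltri, Rtri, RI]"
  shows "(\<forall>S\<in>set Ss. S \<subseteq> T \<and> is_subsemiring n S)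
         \<and> \<Union>(set Ss) = T
         \<and> (\<forall>i<length Ss. \<forall>j<length Ss. i \<noteq> j \<longrightarrow> Ss ! i \<inter> Ss ! j = {})"
proof -
  note abc = assms(2,3,4)
  have ab: "a \<noteq> b" "b \<noteq> c" "a \<noteq> c" "b \<noteq> a" "c \<noteq> b" "c \<noteq> a" using abc by auto
  define F where "F = (\<lambda>P. {\<alpha> \<in> T. (\<alpha> a, \<alpha> b, \<alpha> c) \<in> P})"
  define Ps where "Ps = [{(a,a,a),(a,a,b)}, {(b,b,b)}, {(b,c,c),(c,c,c)}, {(a,b,b)}, {(b,b,c)},
     {(a,a,c)}, {(a,c,c)}, {(a,b,c)}]"
  have "Na = F {(a,a,a),(a,a,b)}"
    unfolding Na_def F_def T_def
  proof (rule nil_char[OF abc])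
    fix \<alpha> assume "\<alpha> \<in> triangle n a b c" "(\<alpha> a, \<alpha> b, \<alpha> c) \<in> {(a, a, a), (a, a, b)}"
    then show "\<forall>y\<in>{a, b, c}. \<alpha> (\<alpha> y) = a" by auto
  next
    fix \<alpha> assume "\<alpha> \<in> triangle n a b c" "(\<alpha> a, \<alpha> b, \<alpha> c) \<in> valid a b c - {(a, a, a), (a, a, b)}"
    then show "\<exists>y\<in>{a, b, c}. y \<noteq> a \<and> \<alpha> y = y"
      unfolding valid_def
      apply (simp only: Diff_iff insert_iff empty_iff prod.inject simp_thms)
      apply (elim disjE conjE)
      using ab by auto
  qed simp
  have "Nb = F {(b,b,b)}"
    unfolding Nb_def F_def T_def
  proof (rule nil_char[OF abc])
    fix \<alpha> assume "\<alpha> \<in> triangle n a b c" "(\<alpha> a, \<alpha> b, \<alpha> c) \<in> {(b,b,b)}"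
    then show "\<forall>y\<in>{a, b, c}. \<alpha> (\<alpha> y) = b" by auto
  next
    fix \<alpha> assume "\<alpha> \<in> triangle n a b c" "(\<alpha> a, \<alpha> b, \<alpha> c) \<in> valid a b c - {(b,b,b)}"
    then show "\<exists>y\<in>{a, b, c}. y \<noteq> b \<and> \<alpha> y = y"
      unfolding valid_def
      apply (simp only: Diff_iff insert_iff empty_iff prod.inject simp_thms)
      apply (elim disjE conjE)
      using ab by auto
  qed simp
  have "Nc = F {(b,c,c),(c,c,c)}"
    unfolding Nc_def F_def T_def
  proof (rule nil_char[OF abc])
    fix \<alpha> assume "\<alpha> \<in> triangle n a b c" "(\<alpha> a, \<alpha> b, \<alpha> c) \<in> {(b,c,c),(c,c,c)}"
    then show "\<forall>y\<in>{a, b, c}. \<alpha> (\<alpha> y) = c" by auto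
  next
    fix \<alpha> assume "\<alpha> \<in> triangle n a b c" "(\<alpha> a, \<alpha> b, \<alpha> c) \<in> valid a b c - {(b,c,c),(c,c,c)}"
    then show "\<exists>y\<in>{a, b, c}. y \<noteq> c \<and> \<alpha> y = y"
      unfolding valid_def
      apply (simp only: Diff_iff insert_iff empty_iff prod.inject simp_thms)
      apply (elim disjE conjE)
      using ab by auto
  qed simp
  have "RI = F {(a,b,c)}" unfolding RI_def F_def T_def by (rule RI_char[OF abc])
  have "Lpar = F {(a,b,b)}" "Rpar = F {(b,b,c)}" "Ltri = F {(a,a,c)}" "Rtri = F {(a,c,c)}"
    unfolding Lpar_def Rpar_def Ltri_def Rtri_def F_def by auto
  have SsPs: "Ss = map F Ps"
    unfolding Ss_def Ps_def by (simp add: \<open>Na = _\<close> \<open>Nb = _\<close> \<open>Nc = _\<close> \<open>RI = _\<close> \<open>Lpar = _\<close> \<open>Rpar = _\<close> \<open>Ltri = _\<close> \<open>Rtri = _\<close>)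
  have sub: "\<forall>P\<in>set Ps. P \<subseteq> valid a b c \<and> P \<noteq> {} \<and> (\<forall>t\<in>P. \<forall>s\<in>P. tmax t s \<in> P \<and> tcomp a b c t s \<in> P)"
    unfolding Ps_def valid_def using ab abc by (simp add: tmax_def tcomp_def tlook_def max_def)
  have part1: "\<forall>S\<in>set Ss. S \<subseteq> T \<and> is_subsemiring n S"
    unfolding SsPs
  proof
    fix S assume "S \<in> set (map F Ps)"
    then obtain P where P: "P \<in> set Ps" "S = F P" by auto
    show "S \<subseteq> T \<and> is_subsemiring n S"
      using sub_gen[OF abc, of P] sub P unfolding F_def T_def by auto
  qed
  have cover: "\<Union>(set Ps) = valid a b c" unfolding Ps_def valid_def by auto
  have part2: "\<Union>(set Ss) = T"
  proof
    show "\<Union>(set Ss) \<subseteq> T" using part1 by auto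
    show "T \<subseteq> \<Union>(set Ss)"
    proof
      fix \<alpha> assume A: "\<alpha> \<in> T"
      have "(\<alpha> a, \<alpha> b, \<alpha> c) \<in> valid a b c"
        using tri_cases[OF A[unfolded T_def] abc] by (simp add: valid_def)
      then obtain P where "P \<in> set Ps" "(\<alpha> a, \<alpha> b, \<alpha> c) \<in> P" using cover by blast
      then show "\<alpha> \<in> \<Union>(set Ss)" using A unfolding SsPs F_def by auto
    qed
  qed
  have disjP: "\<forall>i<length Ps. \<forall>j<length Ps. i \<noteq> j \<longrightarrow> Ps ! i \<inter> Ps ! j = {}"
    unfolding Ps_def using ab
    by (simp add: numeral_eq_Suc All_less_Suc2)
  have part3: "\<forall>i<length Ss. \<forall>j<length Ss. i \<noteq> j \<longrightarrow> Ss ! i \<inter> Ss ! j = {}"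
    unfolding SsPs using disjP by (auto simp: F_def)
  show ?thesis using part1 part2 part3 by blast
qed

end
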